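(* For $k\ge0$, let $S_k$ be the star signed graph with $k+1$ vertices and $k$ positive edges (all joining one center vertex to the $k$ other vertices). Then $X_{S_k}=\sum_{i=0}^k(-1)^i\binom{k}{i}p_{1,0}^{k-i}\,p_{i+1,0}$.
   Context: For a signed graph $\Sigma$ (finite graph with edge signs $\mathrm{sgn}(e)\in\{+,-\}$), a coloring $\kappa:V(\Sigma)\to\mathbb{Z}$ is proper if $\kappa(u)\ne\mathrm{sgn}(e)\kappa(v)$ for every edge $e$ with endpoints $u,v$, and $X_\Sigma=\sum_{\kappa\text{ proper}}\prod_{v}x_{\kappa(v)}$ in commuting variables $x_i$, $i\in\mathbb{Z}$. $p_{a,b}=\sum_{i\in\mathbb{Z}}x_i^ax_{-i}^b$. *)

theory Defs
  imports Main "HOL-Library.Multiset" "HOL-Library.FuncSet"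
begin

text \<open>Formal power series in commuting variables x_i (i an integer), represented by
  their coefficient function: a monomial is a finite multiset of integers (the
  multiset of indices, with multiplicity = exponent).\<close>
type_synonym sfun = "int multiset \<Rightarrow> int"

definition sf_one :: sfun where
  "sf_one = (\<lambda>m. if m = {#} then 1 else 0)"

definition sf_mult :: "sfun \<Rightarrow> sfun \<Rightarrow> sfun" where
  "sf_mult f g = (\<lambda>m. \<Sum>m1\<in>{m1. m1 \<subseteq># m}. f m1 * g (m - m1))"

definition sf_pow :: "sfun \<Rightarrow> nat \<Rightarrow> sfun" where
  "sf_pow f n = ((sf_mult f) ^^ n) sf_one"

text \<open>p_{a,b} = sum over integers i of x_i^a x_{-i}^b.\<close>
definition p_ab :: "nat \<Rightarrow> nat \<Rightarrow> sfun" where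
  "p_ab a b = (\<lambda>m. int (card {i::int. m = replicate_mset a i + replicate_mset b (- i)}))"

text \<open>A signed graph: finite vertex set V and a set of edges (u, v, s), where s = True
  means the edge is positive and s = False means negative.\<close>
definition proper_coloring :: "'v set \<Rightarrow> ('v \<times> 'v \<times> bool) set \<Rightarrow> ('v \<Rightarrow> int) \<Rightarrow> bool" where
  "proper_coloring V E \<kappa> \<longleftrightarrow>
     (\<forall>(u, v, s) \<in> E. \<kappa> u \<noteq> (if s then \<kappa> v else - \<kappa> v))"

definition chrom_sym :: "'v set \<Rightarrow> ('v \<times> 'v \<times> bool) set \<Rightarrow> sfun" where
  "chrom_sym V E = (\<lambda>m. int (card {\<kappa> \<in> V \<rightarrow>\<^sub>E (UNIV :: int set).
        proper_coloring V E \<kappa> \<and> image_mset \<kappa> (mset_set V) = m}))"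

definition star_V :: "nat \<Rightarrow> nat set" where
  "star_V k = {0..k}"

definition star_E :: "nat \<Rightarrow> (nat \<times> nat \<times> bool) set" where
  "star_E k = {(0, j, True) | j. j \<in> {1..k}}"

end

theory Submission
  imports Defs
begin

lemma finite_sub: "finite {m1. m1 \<subseteq># (m::'a multiset)}"
proof (induction m)
  case empty then show ?case by simp
next
  case (add x m)
  have "{m1. m1 \<subseteq># add_mset x m} \<subseteq> {m1. m1 \<subseteq># m} \<union> add_mset x ` {m2. m2 \<subseteq># m}"
  proof
    fix m1 assume "m1 \<in> {m1. m1 \<subseteq># add_mset x m}"
    then have h: "m1 \<subseteq># add_mset x m" by simp
    show "m1 \<in> {m1. m1 \<subseteq># m} \<union> add_mset x ` {m2. m2 \<subseteq># m}"
    proof (cases "x \<in># m1")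
      case True
      then have "m1 = add_mset x (m1 - {#x#})" by simp
      moreover have "m1 - {#x#} \<subseteq># m" using h
        using True by (metis insert_DiffM mset_subset_eq_add_mset_cancel)
      ultimately show ?thesis by blast
    next
      case False
      have "count m1 a \<le> count m a" for a
      proof (cases "a = x")
        case True then show ?thesis using False by (simp add: not_in_iff)
      next
        case F: False
        have "count m1 a \<le> count (add_mset x m) a" using h by (rule mset_subset_eq_count)
        then show ?thesis using F by simp
      qed
      then have "m1 \<subseteq># m" by (simp add: subseteq_mset_def)
      then show ?thesis by blast
    qed
  qed
  then show ?case using add finite_subset by blast
qed

definition T :: "sfun \<Rightarrow> sfun" where
  "T g = (\<lambda>m. \<Sum>d\<in>set_mset m. g (m - {#d#}))"

lemma p1_eq: "p_ab 1 0 m1 = (if (\<exists>i. m1 = {#i#}) then 1 else 0)"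
proof (cases "\<exists>i. m1 = {#i#}")
  case True
  then obtain i where "m1 = {#i#}" by blast
  then have "{i'. m1 = replicate_mset 1 i' + replicate_mset 0 (- i')} = {i}" by auto
  then show ?thesis using True by (simp add: p_ab_def)
next
  case False
  then have "{i'. m1 = replicate_mset 1 i' + replicate_mset 0 (- i')} = {}" by auto
  then show ?thesis using False by (simp add: p_ab_def)
qed

lemma L1: "sf_mult (p_ab 1 0) g = T g"
proof
  fix m
  have "T g m = (\<Sum>d\<in>set_mset m. g (m - {#d#}))" by (simp add: T_def)
  also have "\<dots> = (\<Sum>m1\<in>(\<lambda>d. {#d#}) ` set_mset m. g (m - m1))"
    by (subst sum.reindex) (auto simp: inj_on_def)
  also have "\<dots> = (\<Sum>m1\<in>{m1. m1 \<subseteq># m}. p_ab 1 0 m1 * g (m - m1))"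
    by (rule sum.mono_neutral_cong_left) (auto simp: finite_sub p1_eq p1_eq[unfolded One_nat_def])
  finally show "sf_mult (p_ab 1 0) g m = T g m" by (simp add: sf_mult_def)
qed

lemma t1: "m1 \<subseteq># (m::int multiset) \<Longrightarrow> d \<in># m1 \<Longrightarrow> d \<in># m" by (rule mset_subset_eqD)
lemma t3: "m1 \<subseteq># (m::int multiset) \<Longrightarrow> d \<in># m1 \<Longrightarrow> m - {#d#} - (m1 - {#d#}) = m - m1"
proof -
  assume a:  "m1 \<subseteq># (m::int multiset)" "d \<in># m1" 
  have "count m1 d \<ge> 1" using a by (simp add: Suc_le_eq)
  then show ?thesis by (auto simp: multiset_eq_iff)
qed
lemma t2: "m1 \<subseteq># (m::int multiset) \<Longrightarrow> d \<in># m1 \<Longrightarrow> m1 - {#d#} \<subseteq># m - {#d#}"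
  by (metis insert_DiffM mset_subset_eq_add_mset_cancel t1)
lemma t4: "d \<in># (m::int multiset) \<Longrightarrow> m2 \<subseteq># m - {#d#} \<Longrightarrow> add_mset d m2 \<subseteq># m"
  by (metis insert_DiffM mset_subset_eq_add_mset_cancel)

lemma L2: "sf_mult (T g) h = T (sf_mult g h)"
proof
  fix m :: "int multiset"
  have "sf_mult (T g) h m = (\<Sum>m1\<in>{m1. m1 \<subseteq># m}. \<Sum>d\<in>set_mset m1. g (m1 - {#d#}) * h (m - m1))"
    by (simp add: sf_mult_def T_def sum_distrib_right)
  also have "\<dots> = (\<Sum>(m1,d)\<in>(SIGMA m1:{m1. m1 \<subseteq># m}. set_mset m1). g (m1 - {#d#}) * h (m - m1))"
    by (rule sum.Sigma) (auto simp: finite_sub)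
  also have "\<dots> = (\<Sum>(d,m2)\<in>(SIGMA d:set_mset m. {m2. m2 \<subseteq># m - {#d#}}). g m2 * h (m - {#d#} - m2))"
    apply (rule sum.reindex_bij_witness[where j = "\<lambda>(m1,d). (d, m1 - {#d#})" and i = "\<lambda>(d,m2). (add_mset d m2, d)"])
    apply (auto intro: t1 t2 t4 simp: t3)
    done
  also have "\<dots> = (\<Sum>d\<in>set_mset m. \<Sum>m2\<in>{m2. m2 \<subseteq># m - {#d#}}. g m2 * h (m - {#d#} - m2))"
    by (rule sum.Sigma[symmetric]) (auto simp: finite_sub)
  also have "\<dots> = T (sf_mult g h) m" by (simp add: T_def sf_mult_def)
  finally show "sf_mult (T g) h m = T (sf_mult g h) m" .
qed

lemma L3: "sf_mult sf_one h = h"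
proof
  fix m :: "int multiset"
  have "sf_mult sf_one h m = (\<Sum>m1\<in>{m1. m1 \<subseteq># m}. if m1 = {#} then h (m - m1) else 0)"
    unfolding sf_mult_def sf_one_def by (rule sum.cong) auto
  also have "\<dots> = h m" by (simp add: finite_sub)
  finally show "sf_mult sf_one h m = h m" .
qed

lemma L4: "sf_mult (sf_pow (p_ab 1 0) n) h = (T ^^ n) h"
proof (induction n)
  case 0 then show ?case by (simp add: sf_pow_def L3)
next
  case (Suc n)
  have "sf_pow (p_ab 1 0) (Suc n) = T (sf_pow (p_ab 1 0) n)"
    using L1[of "(sf_mult (p_ab 1 0) ^^ n) sf_one"] by (simp add: sf_pow_def)
  then show ?case using Suc by (simp add: L2)
qed

lemma T_sum: "finite J \<Longrightarrow> T (\<lambda>m. \<Sum>j\<in>J. c j * f j m) m = (\<Sum>j\<in>J. c j * T (f j) m)"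
  by (simp add: T_def sum_distrib_left sum.swap[of _ J])

definition Yset :: "nat \<Rightarrow> nat \<Rightarrow> int multiset \<Rightarrow> (nat \<Rightarrow> int) set" where
  "Yset k i m = {\<kappa> \<in> {0..k} \<rightarrow>\<^sub>E (UNIV::int set). (\<forall>j\<in>{1..k}. \<kappa> j \<noteq> \<kappa> 0) \<and>
       image_mset \<kappa> (mset_set {0..k}) + replicate_mset i (\<kappa> 0) = m}"

definition Y :: "nat \<Rightarrow> nat \<Rightarrow> sfun" where
  "Y k i = (\<lambda>m. int (card (Yset k i m)))"

lemma Yset_finite: "finite (Yset k i m)"
proof (rule finite_subset)
  show "Yset k i m \<subseteq> {0..k} \<rightarrow>\<^sub>E set_mset m"
  proof
    fix \<kappa> assume h: "\<kappa> \<in> Yset k i m"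
    have "\<kappa> x \<in># m" if "x \<in> {0..k}" for x
    proof -
      have "\<kappa> x \<in># image_mset \<kappa> (mset_set {0..k})" using that by simp
      then show ?thesis using h by (auto simp: Yset_def)
    qed
    then show "\<kappa> \<in> {0..k} \<rightarrow>\<^sub>E set_mset m" using h by (auto simp: Yset_def)
  qed
  show "finite ({0..k} \<rightarrow>\<^sub>E set_mset m)" by (rule finite_PiE) auto
qed

lemma Y0: "Y 0 i = p_ab (i + 1) 0"
proof
  fix m
  have "bij_betw (\<lambda>\<kappa>. \<kappa> 0) (Yset 0 i m) {c. m = replicate_mset (Suc i) c}"
  proof (rule bij_betw_byWitness[where f' = "\<lambda>c. (\<lambda>x. if x = 0 then c else undefined)"])
    show "\<forall>a\<in>Yset 0 i m. (\<lambda>x. if x = 0 then a 0 else undefined) = a"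
      by (auto simp: Yset_def fun_eq_iff PiE_def extensional_def)
    show "\<forall>a'\<in>{c. m = replicate_mset (Suc i) c}. (\<lambda>x. if x = 0 then a' else undefined) 0 = a'"
      by simp
    show "(\<lambda>\<kappa>. \<kappa> 0) ` Yset 0 i m \<subseteq> {c. m = replicate_mset (Suc i) c}"
      by (auto simp: Yset_def)
    show "(\<lambda>c x. if x = 0 then c else undefined) ` {c. m = replicate_mset (Suc i) c} \<subseteq> Yset 0 i m"
      by (auto simp: Yset_def PiE_def extensional_def)
  qed
  then have "card (Yset 0 i m) = card {c. m = replicate_mset (Suc i) c}"
    by (rule bij_betw_same_card)
  then show "Y 0 i m = p_ab (i + 1) 0 m" by (simp add: Y_def p_ab_def)
qed

lemma img_Suc: "image_mset \<kappa> (mset_set {0..Suc k}) = add_mset (\<kappa> (Suc k)) (image_mset \<kappa> (mset_set {0..k}))"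
proof -
  have "{0..Suc k} = insert (Suc k) {0..k}" by auto
  then show ?thesis by simp
qed

lemma img_restrict: "image_mset (restrict \<kappa> {0..(k::nat)}) (mset_set {0..k}) = image_mset \<kappa> (mset_set {0..k})"
  by (rule image_mset_cong) auto

lemma img_upd: "image_mset (\<kappa>(Suc k := d)) (mset_set {0..k}) = image_mset \<kappa> (mset_set {0..k})"
  by (rule image_mset_cong) simp

lemma Yrec: "card (Yset (Suc k) i m) + card (Yset k (Suc i) m) =
  (\<Sum>d\<in>set_mset m. card (Yset k i (m - {#d#})))"
proof -
  define Sg where "Sg = (SIGMA d:set_mset m. Yset k i (m - {#d#}))"
  define U1 where "U1 = {p \<in> Sg. fst p \<noteq> snd p 0}"
  define U2 where "U2 = {p \<in> Sg. fst p = snd p 0}"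
  have fSg: "finite Sg" unfolding Sg_def by (auto intro: Yset_finite)
  have cSg: "card Sg = (\<Sum>d\<in>set_mset m. card (Yset k i (m - {#d#})))"
    unfolding Sg_def by (rule card_SigmaI) (auto intro: Yset_finite)
  have "Sg = U1 \<union> U2" "U1 \<inter> U2 = {}" unfolding U1_def U2_def by auto
  then have cU: "card Sg = card U1 + card U2"
    using fSg by (simp add: card_Un_disjoint)
  have b1: "bij_betw (\<lambda>\<kappa>. (\<kappa> (Suc k), restrict \<kappa> {0..k})) (Yset (Suc k) i m) U1"
  proof (rule bij_betw_byWitness[where f' = "\<lambda>(d,\<kappa>). \<kappa>(Suc k := d)"])
    show "\<forall>a\<in>Yset (Suc k) i m. (case (a (Suc k), restrict a {0..k}) of (d, \<kappa>) \<Rightarrow> \<kappa>(Suc k := d)) = a"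
      by (auto simp: Yset_def fun_eq_iff PiE_def extensional_def)
    show "\<forall>a'\<in>U1. (case (case a' of (d, \<kappa>) \<Rightarrow> \<kappa>(Suc k := d)) of \<kappa> \<Rightarrow> (\<kappa> (Suc k), restrict \<kappa> {0..k})) = a'"
      by (auto simp: U1_def Sg_def Yset_def fun_eq_iff PiE_def extensional_def)
    show "(\<lambda>\<kappa>. (\<kappa> (Suc k), restrict \<kappa> {0..k})) ` Yset (Suc k) i m \<subseteq> U1"
    proof
      fix p assume "p \<in> (\<lambda>\<kappa>. (\<kappa> (Suc k), restrict \<kappa> {0..k})) ` Yset (Suc k) i m"
      then obtain \<kappa> where p: "p = (\<kappa> (Suc k), restrict \<kappa> {0..k})" and h: "\<kappa> \<in> Yset (Suc k) i m" by blast
      have pi: "\<kappa> \<in> {0..Suc k} \<rightarrow>\<^sub>E UNIV" and pr: "\<forall>j\<in>{1..Suc k}. \<kappa> j \<noteq> \<kappa> 0"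
        and ct: "image_mset \<kappa> (mset_set {0..Suc k}) + replicate_mset i (\<kappa> 0) = m"
        using h by (auto simp: Yset_def)
      have m: "m = add_mset (\<kappa> (Suc k)) (image_mset \<kappa> (mset_set {0..k}) + replicate_mset i (\<kappa> 0))"
        using ct img_Suc[of \<kappa> k] by simp
      have "restrict \<kappa> {0..k} \<in> Yset k i (m - {#\<kappa> (Suc k)#})"
        using pr by (auto simp: Yset_def img_restrict m)
      moreover have "\<kappa> (Suc k) \<in># m" using m by simp
      moreover have "\<kappa> (Suc k) \<noteq> \<kappa> 0" using pr by auto
      ultimately show "p \<in> U1" by (simp add: p U1_def Sg_def)
    qed
    show "(\<lambda>(d, \<kappa>). \<kappa>(Suc k := d)) ` U1 \<subseteq> Yset (Suc k) i m"
    proof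
      fix q assume "q \<in> (\<lambda>(d, \<kappa>). \<kappa>(Suc k := d)) ` U1"
      then obtain d \<kappa> where q: "q = \<kappa>(Suc k := d)" and h: "(d, \<kappa>) \<in> U1" by auto
      have dm: "d \<in># m" and dk: "d \<noteq> \<kappa> 0" and hk: "\<kappa> \<in> Yset k i (m - {#d#})"
        using h by (auto simp: U1_def Sg_def)
      have pi: "\<kappa> \<in> {0..k} \<rightarrow>\<^sub>E UNIV" and pr: "\<forall>j\<in>{1..k}. \<kappa> j \<noteq> \<kappa> 0"
        and ct: "image_mset \<kappa> (mset_set {0..k}) + replicate_mset i (\<kappa> 0) = m - {#d#}"
        using hk by (auto simp: Yset_def)
      have "q \<in> {0..Suc k} \<rightarrow>\<^sub>E UNIV" using pi by (auto simp: q PiE_def extensional_def)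
      moreover have "\<forall>j\<in>{1..Suc k}. q j \<noteq> q 0"
        using pr dk by (auto simp: q le_Suc_eq)
      moreover have "image_mset q (mset_set {0..Suc k}) + replicate_mset i (q 0) = m"
        using ct dm by (simp add: q img_Suc img_upd)
      ultimately show "q \<in> Yset (Suc k) i m" by (simp add: Yset_def)
    qed
  qed
  have b2: "bij_betw (\<lambda>\<kappa>. (\<kappa> 0, \<kappa>)) (Yset k (Suc i) m) U2"
  proof (rule bij_betw_byWitness[where f' = snd])
    show "\<forall>a\<in>Yset k (Suc i) m. snd (a 0, a) = a" by simp
    show "\<forall>a'\<in>U2. (snd a' 0, snd a') = a'" by (auto simp: U2_def)
    show "(\<lambda>\<kappa>. (\<kappa> 0, \<kappa>)) ` Yset k (Suc i) m \<subseteq> U2"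
    proof
      fix p assume "p \<in> (\<lambda>\<kappa>. (\<kappa> 0, \<kappa>)) ` Yset k (Suc i) m"
      then obtain \<kappa> where p: "p = (\<kappa> 0, \<kappa>)" and h: "\<kappa> \<in> Yset k (Suc i) m" by blast
      have ct: "image_mset \<kappa> (mset_set {0..k}) + replicate_mset (Suc i) (\<kappa> 0) = m"
        using h by (auto simp: Yset_def)
      then have "\<kappa> 0 \<in># m" by auto
      moreover have "\<kappa> \<in> Yset k i (m - {#\<kappa> 0#})" using h ct[symmetric] by (auto simp: Yset_def)
      ultimately show "p \<in> U2" by (simp add: p U2_def Sg_def)
    qed
    show "snd ` U2 \<subseteq> Yset k (Suc i) m"
    proof
      fix q assume "q \<in> snd ` U2"
      then obtain d where h: "(d, q) \<in> U2" by auto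
      have dm: "d \<in># m" and dk: "d = q 0" and hk: "q \<in> Yset k i (m - {#d#})"
        using h by (auto simp: U2_def Sg_def)
      then show "q \<in> Yset k (Suc i) m" by (auto simp: Yset_def)
    qed
  qed
  have "card (Yset (Suc k) i m) = card U1" using b1 by (rule bij_betw_same_card)
  moreover have "card (Yset k (Suc i) m) = card U2" using b2 by (rule bij_betw_same_card)
  ultimately show ?thesis using cU cSg by simp
qed

lemma Yrec': "Y (Suc k) i m = T (Y k i) m - Y k (Suc i) m"
proof -
  have "int (card (Yset (Suc k) i m)) + int (card (Yset k (Suc i) m)) =
        (\<Sum>d\<in>set_mset m. int (card (Yset k i (m - {#d#}))))"
    using Yrec[of k i m] by (metis of_nat_add of_nat_sum)
  then show ?thesis by (simp add: Y_def T_def)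
qed

lemma pascal_sum:
  fixes a :: "nat \<Rightarrow> int"
  shows "(\<Sum>j\<le>k. int (k choose j) * a j) + (\<Sum>j\<le>k. int (k choose j) * a (Suc j)) =
         (\<Sum>j\<le>Suc k. int (Suc k choose j) * a j)"
proof -
  have e1: "(\<Sum>j\<le>k. int (k choose j) * a j) = (\<Sum>j\<le>Suc k. int (k choose j) * a j)"
    by simp
  also have "\<dots> = a 0 + (\<Sum>j\<le>k. int (k choose Suc j) * a (Suc j))"
    by (subst sum.atMost_Suc_shift) simp
  finally have A: "(\<Sum>j\<le>k. int (k choose j) * a j) = a 0 + (\<Sum>j\<le>k. int (k choose Suc j) * a (Suc j))" .
  have "(\<Sum>j\<le>Suc k. int (Suc k choose j) * a j) = a 0 + (\<Sum>j\<le>k. int (Suc k choose Suc j) * a (Suc j))"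
    by (subst sum.atMost_Suc_shift) simp
  also have "\<dots> = a 0 + (\<Sum>j\<le>k. int (k choose j) * a (Suc j)) + (\<Sum>j\<le>k. int (k choose Suc j) * a (Suc j))"
    by (simp add: sum.distrib algebra_simps)
  finally show ?thesis using A by simp
qed

lemma Y_formula: "Y k i m = (\<Sum>j\<le>k. (-1)^j * int (k choose j) * (T ^^ (k - j)) (p_ab (i + j + 1) 0) m)"
proof (induction k arbitrary: i m)
  case 0 then show ?case by (simp add: Y0)
next
  case (Suc k)
  define a where "a j = (-1)^j * (T ^^ (Suc k - j)) (p_ab (i + j + 1) 0) m" for j
  have YF: "Y k i = (\<lambda>m. \<Sum>j\<le>k. ((-1)^j * int (k choose j)) * (T ^^ (k - j)) (p_ab (i + j + 1) 0) m)"
    using Suc.IH by (simp add: fun_eq_iff)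
  have "T (Y k i) m = (\<Sum>j\<le>k. ((-1)^j * int (k choose j)) * T ((T ^^ (k - j)) (p_ab (i + j + 1) 0)) m)"
    unfolding YF by (rule T_sum) simp
  also have "\<dots> = (\<Sum>j\<le>k. int (k choose j) * a j)"
  proof (rule sum.cong)
    fix j assume "j \<in> {..k}"
    then have "Suc k - j = Suc (k - j)" by simp
    then show "((-1)^j * int (k choose j)) * T ((T ^^ (k - j)) (p_ab (i + j + 1) 0)) m = int (k choose j) * a j"
      by (simp add: a_def)
  qed simp
  finally have P1: "T (Y k i) m = (\<Sum>j\<le>k. int (k choose j) * a j)" .
  have "Y k (Suc i) m = (\<Sum>j\<le>k. (-1)^j * int (k choose j) * (T ^^ (k - j)) (p_ab (Suc i + j + 1) 0) m)"
    by (rule Suc.IH)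
  also have "\<dots> = - (\<Sum>j\<le>k. int (k choose j) * a (Suc j))"
    by (simp add: a_def sum_negf[symmetric] mult_ac)
  finally have P2: "Y k (Suc i) m = - (\<Sum>j\<le>k. int (k choose j) * a (Suc j))" .
  have "Y (Suc k) i m = (\<Sum>j\<le>Suc k. int (Suc k choose j) * a j)"
    using Yrec'[of k i m] P1 P2 pascal_sum[of k a] by simp
  also have "\<dots> = (\<Sum>j\<le>Suc k. (-1)^j * int (Suc k choose j) * (T ^^ (Suc k - j)) (p_ab (i + j + 1) 0) m)"
    by (simp add: a_def mult_ac)
  finally show ?case .
qed

theorem lemma6p4:
  fixes k :: nat
  shows "chrom_sym (star_V k) (star_E k) =
    (\<lambda>m. \<Sum>i = 0..k. (-1) ^ i * int (k choose i) *
           sf_mult (sf_pow (p_ab 1 0) (k - i)) (p_ab (i + 1) 0) m)"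
proof
  fix m
  have "proper_coloring {0..k} (star_E k) \<kappa> \<longleftrightarrow> (\<forall>j\<in>{1..k}. \<kappa> j \<noteq> \<kappa> 0)" for \<kappa> :: "nat \<Rightarrow> int"
    by (auto simp: proper_coloring_def star_E_def)
  then have "chrom_sym (star_V k) (star_E k) m = Y k 0 m"
    by (simp add: chrom_sym_def Y_def Yset_def star_V_def)
  also have "\<dots> = (\<Sum>j\<le>k. (-1)^j * int (k choose j) * (T ^^ (k - j)) (p_ab (j + 1) 0) m)"
    by (simp add: Y_formula)
  also have "\<dots> = (\<Sum>i = 0..k. (-1) ^ i * int (k choose i) *
           sf_mult (sf_pow (p_ab 1 0) (k - i)) (p_ab (i + 1) 0) m)"
    by (simp add: L4 L4[unfolded One_nat_def] atLeast0AtMost)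
  finally show "chrom_sym (star_V k) (star_E k) m = (\<Sum>i = 0..k. (-1) ^ i * int (k choose i) *
           sf_mult (sf_pow (p_ab 1 0) (k - i)) (p_ab (i + 1) 0) m)" .
qed

end
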